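(* Let $0<a,b<1$, $f\ge3$, and let $\overline w_{m,n}$ be the array defined in the context. Then for all integers $1\le m<n$, $\overline w_{m,n}=\overline w_{n-1,m-1}$.
   Context: Let $r,y,z$ be indeterminates. For $c\in(0,1)$: $\omega_c:=1-(1-c)^2r^2y^2z^2$, $\tau_c:=1+(1-c)^2r^2z^2y(1-y)$, $x_c:=c^2z^2\tau_c^2$, $\beta_c:=1+z^2(c^2-(1-c)^2r^2(y^2+c^2(1-y)^2z^2))$; $w^*_0(c):=(\beta_c-\omega_c)/x_c$, $w^*_1(c):=1$, $w^*_{n+1}(c):=\beta_cw^*_n(c)-x_cw^*_{n-1}(c)$ ($n\ge1$). Also $\tau(a,b):=1+(1-a)(1-b)r^2z^2y(1-y)$, $x(a,b):=b^2z^2\tau(a,b)^2$, $x(b,a):=a^2z^2\tau(a,b)^2$, $\beta(a,b):=\beta_b-(b-a)b^2(1-b)r^2(1-y)^2z^4$, $\beta(b,a):=\beta_a-(a-b)a^2(1-a)r^2(1-y)^2z^4$. Define $\overline w_{m,m+1}=\overline w_{m+1,m}:=1$ ($m\ge0$), and for $n-m\ge2$ (indices $\ge0$): upward: $\overline w_{m,m+\ell}:=w^*_\ell(a)$ if $m+\ell\le f$, $:=w^*_\ell(b)$ if $f\le m$; $\overline w_{f-\ell,f+1}:=\frac{1-b}{1-a}w^*_{\ell+1}(a)+\frac{b-a}{1-a}w^*_\ell(a)$ ($1\le\ell\le f$); $\overline w_{m,f+2}:=\beta(a,b)\overline w_{m,f+1}-x(a,b)\overline w_{m,f}$ ($m\le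 f-1$); $\overline w_{m,f+j+1}:=\beta_b\overline w_{m,f+j}-x_b\overline w_{m,f+j-1}$ ($m\le f-1$, $j\ge2$). Downward: $\overline w_{m+\ell,m}:=w^*_\ell(a)$ if $m+\ell\le f-1$, $:=w^*_\ell(b)$ if $f-1\le m$; $\overline w_{f+j,f-2}:=\frac{1-a}{1-b}w^*_{j+2}(b)+\frac{a-b}{1-b}w^*_{j+1}(b)$ ($j\ge0$); $\overline w_{n,f-3}:=\beta(b,a)\overline w_{n,f-2}-x(b,a)\overline w_{n,f-1}$ ($n\ge f$); $\overline w_{n,f-\ell-2}:=\beta_a\overline w_{n,f-\ell-1}-x_a\overline w_{n,f-\ell}$ ($n\ge f$, $\ell\ge2$). *)

theory Defs
  imports Main "HOL.Real"
begin

(* The indeterminates r, y, z are modelled as real numbers. *)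

definition omega_c :: "real \<Rightarrow> real \<Rightarrow> real \<Rightarrow> real \<Rightarrow> real" where
  "omega_c c r y z = 1 - (1 - c)^2 * r^2 * y^2 * z^2"

definition tau_c :: "real \<Rightarrow> real \<Rightarrow> real \<Rightarrow> real \<Rightarrow> real" where
  "tau_c c r y z = 1 + (1 - c)^2 * r^2 * z^2 * y * (1 - y)"

definition x_c :: "real \<Rightarrow> real \<Rightarrow> real \<Rightarrow> real \<Rightarrow> real" where
  "x_c c r y z = c^2 * z^2 * (tau_c c r y z)^2"

definition beta_c :: "real \<Rightarrow> real \<Rightarrow> real \<Rightarrow> real \<Rightarrow> real" where
  "beta_c c r y z = 1 + z^2 * (c^2 - (1 - c)^2 * r^2 * (y^2 + c^2 * (1 - y)^2 * z^2))"

fun wstar :: "real \<Rightarrow> real \<Rightarrow> real \<Rightarrow> real \<Rightarrow> nat \<Rightarrow> real" where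
  "wstar c r y z 0 = (beta_c c r y z - omega_c c r y z) / x_c c r y z"
| "wstar c r y z (Suc 0) = 1"
| "wstar c r y z (Suc (Suc n)) =
     beta_c c r y z * wstar c r y z (Suc n) - x_c c r y z * wstar c r y z n"

definition tau2 :: "real \<Rightarrow> real \<Rightarrow> real \<Rightarrow> real \<Rightarrow> real \<Rightarrow> real" where
  "tau2 a b r y z = 1 + (1 - a) * (1 - b) * r^2 * z^2 * y * (1 - y)"

(* x(a,b) = b^2 z^2 tau(a,b)^2; then x(b,a) = x2 b a = a^2 z^2 tau(a,b)^2 since tau is symmetric *)
definition x2 :: "real \<Rightarrow> real \<Rightarrow> real \<Rightarrow> real \<Rightarrow> real \<Rightarrow> real" where
  "x2 a b r y z = b^2 * z^2 * (tau2 a b r y z)^2"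

definition beta2 :: "real \<Rightarrow> real \<Rightarrow> real \<Rightarrow> real \<Rightarrow> real \<Rightarrow> real" where
  "beta2 a b r y z = beta_c b r y z - (b - a) * b^2 * (1 - b) * r^2 * (1 - y)^2 * z^4"

(* wup a b f r y z m i = wbar_{m, f+1+i}  for m \<le> f-1.
   Uses wbar_{m,f} = w*_{f-m}(a) (given by the first upward clause since f \<le> f). *)
fun wup :: "real \<Rightarrow> real \<Rightarrow> nat \<Rightarrow> real \<Rightarrow> real \<Rightarrow> real \<Rightarrow> nat \<Rightarrow> nat \<Rightarrow> real" where
  "wup a b f r y z m 0 =
     (1 - b) / (1 - a) * wstar a r y z (f - m + 1) + (b - a) / (1 - a) * wstar a r y z (f - m)"
| "wup a b f r y z m (Suc 0) =
     beta2 a b r y z * wup a b f r y z m 0 - x2 a b r y z * wstar a r y z (f - m)"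
| "wup a b f r y z m (Suc (Suc i)) =
     beta_c b r y z * wup a b f r y z m (Suc i) - x_c b r y z * wup a b f r y z m i"

(* wdn a b f r y z p k = wbar_{p, f-2-k}  for p \<ge> f.
   Uses wbar_{p,f-1} = w*_{p-f+1}(b) (given by the second downward clause since f-1 \<le> f-1). *)
fun wdn :: "real \<Rightarrow> real \<Rightarrow> nat \<Rightarrow> real \<Rightarrow> real \<Rightarrow> real \<Rightarrow> nat \<Rightarrow> nat \<Rightarrow> real" where
  "wdn a b f r y z p 0 =
     (1 - a) / (1 - b) * wstar b r y z (p - f + 2) + (a - b) / (1 - b) * wstar b r y z (p - f + 1)"
| "wdn a b f r y z p (Suc 0) =
     beta2 b a r y z * wdn a b f r y z p 0 - x2 b a r y z * wstar b r y z (p - f + 1)"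
| "wdn a b f r y z p (Suc (Suc k)) =
     beta_c a r y z * wdn a b f r y z p (Suc k) - x_c a r y z * wdn a b f r y z p k"

(* The array \<overline>w_{m,n} (indices \<ge> 0). The diagonal m = n is not defined in the paper;
   it is set to 0 here and never used. *)
definition wbar :: "real \<Rightarrow> real \<Rightarrow> nat \<Rightarrow> real \<Rightarrow> real \<Rightarrow> real \<Rightarrow> nat \<Rightarrow> nat \<Rightarrow> real" where
  "wbar a b f r y z m n =
    (if n = m + 1 \<or> m = n + 1 then 1
     else if m < n then
       (if n \<le> f then wstar a r y z (n - m)
        else if f \<le> m then wstar b r y z (n - m)
        else wup a b f r y z m (n - (f + 1)))
     else if n < m then
       (if m \<le> f - 1 then wstar a r y z (m - n)
        else if f - 1 \<le> n then wstar b r y z (m - n)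
        else wdn a b f r y z m (f - 2 - n))
     else 0)"

end

theory Submission
  imports Defs
begin

lemma wstar_rec: "wstar c r y z (n+2) = beta_c c r y z * wstar c r y z (n+1) - x_c c r y z * wstar c r y z n"
  by (simp add: numeral_2_eq_2)

lemma wstar2: "x_c c r y z \<noteq> 0 \<Longrightarrow> wstar c r y z 2 = omega_c c r y z"
  by (simp add: numeral_2_eq_2)

lemma wstar3: "x_c c r y z \<noteq> 0 \<Longrightarrow> wstar c r y z 3 = beta_c c r y z * omega_c c r y z - x_c c r y z"
  by (simp add: numeral_3_eq_3 numeral_2_eq_2)

lemma wdn_shift:
  assumes "f \<le> p"
  shows "wdn a b f r y z (p+2) k = beta_c b r y z * wdn a b f r y z (p+1) k - x_c b r y z * wdn a b f r y z p k"
proof (induction k rule: less_induct)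
  case (less k)
  obtain d where d: "p = f + d" using assms le_Suc_ex by blast
  have e1: "p + 2 - f + 2 = d + 2 + 2" "p + 2 - f + 1 = d + 1 + 2" "p + 1 - f + 2 = d + 1 + 2"
    "p + 1 - f + 1 = d + 2" "p - f + 2 = d + 2" "p - f + 1 = d + 1" using d by auto
  have r1: "wstar b r y z (d+2+2) = beta_c b r y z * wstar b r y z (d+1+2) - x_c b r y z * wstar b r y z (d+2)"
    using wstar_rec[of b r y z "d+2"] by (simp add: algebra_simps)
  have r2: "wstar b r y z (d+1+2) = beta_c b r y z * wstar b r y z (d+2) - x_c b r y z * wstar b r y z (d+1)"
    using wstar_rec[of b r y z "d+1"] by (simp add: algebra_simps)
  have k0: "wdn a b f r y z (p+2) 0 = beta_c b r y z * wdn a b f r y z (p+1) 0 - x_c b r y z * wdn a b f r y z p 0"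
    unfolding wdn.simps e1 r1 r2 by (simp add: algebra_simps)
  show ?case
  proof (cases k)
    case 0 then show ?thesis using k0 by simp
  next
    case (Suc k1)
    show ?thesis
    proof (cases k1)
      case 0
      show ?thesis using k0 unfolding Suc 0 wdn.simps e1 r1 r2 by (simp add: algebra_simps)
    next
      case (Suc k2)
      have i1: "wdn a b f r y z (p+2) (Suc k2) = beta_c b r y z * wdn a b f r y z (p+1) (Suc k2) - x_c b r y z * wdn a b f r y z p (Suc k2)"
        using less \<open>k = Suc k1\<close> Suc by simp
      have i2: "wdn a b f r y z (p+2) k2 = beta_c b r y z * wdn a b f r y z (p+1) k2 - x_c b r y z * wdn a b f r y z p k2"
        using less \<open>k = Suc k1\<close> Suc by simp
      show ?thesis unfolding \<open>k = Suc k1\<close> Suc wdn.simps i1 i2 by (simp add: algebra_simps)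
    qed
  qed
qed

lemma wup_shift:
  assumes "m + 2 \<le> f"
  shows "wup a b f r y z m i = beta_c a r y z * wup a b f r y z (m+1) i - x_c a r y z * wup a b f r y z (m+2) i"
proof (induction i rule: less_induct)
  case (less i)
  obtain d where d: "f = m + 2 + d" using assms le_Suc_ex by blast
  have e1: "f - m + 1 = d + 1 + 2" "f - m = d + 2" "f - (m+1) + 1 = d + 2" "f - (m+1) = d + 1"
    "f - (m+2) + 1 = d + 1" "f - (m+2) = d" using d by auto
  have r1: "wstar a r y z (d+1+2) = beta_c a r y z * wstar a r y z (d+2) - x_c a r y z * wstar a r y z (d+1)"
    using wstar_rec[of a r y z "d+1"] by (simp add: algebra_simps)
  have r2: "wstar a r y z (d+2) = beta_c a r y z * wstar a r y z (d+1) - x_c a r y z * wstar a r y z d"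
    using wstar_rec[of a r y z "d"] by (simp add: algebra_simps)
  have k0: "wup a b f r y z m 0 = beta_c a r y z * wup a b f r y z (m+1) 0 - x_c a r y z * wup a b f r y z (m+2) 0"
    unfolding wup.simps e1 r1 r2 by (simp add: algebra_simps)
  show ?case
  proof (cases i)
    case 0 then show ?thesis using k0 by simp
  next
    case (Suc k1)
    show ?thesis
    proof (cases k1)
      case 0
      show ?thesis using k0 unfolding Suc 0 wup.simps e1 r1 r2 by (simp add: algebra_simps)
    next
      case (Suc k2)
      have i1: "wup a b f r y z m (Suc k2) = beta_c a r y z * wup a b f r y z (m+1) (Suc k2) - x_c a r y z * wup a b f r y z (m+2) (Suc k2)"
        using less \<open>i = Suc k1\<close> Suc by simp
      have i2: "wup a b f r y z m k2 = beta_c a r y z * wup a b f r y z (m+1) k2 - x_c a r y z * wup a b f r y z (m+2) k2"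
        using less \<open>i = Suc k1\<close> Suc by simp
      show ?thesis unfolding \<open>i = Suc k1\<close> Suc wup.simps i1 i2 by (simp add: algebra_simps)
    qed
  qed
qed

lemma one_plus_one: "(1::nat) + 1 = 2" by simp
lemma two_plus_one: "(2::nat) + 1 = 3" by simp

lemmas D = omega_c_def tau_c_def x_c_def beta_c_def tau2_def x2_def beta2_def

lemma b00: "1 - a \<noteq> 0 \<Longrightarrow> 1 - b \<noteq> 0 \<Longrightarrow>
  (1-b)/(1-a) * omega_c a r y z + (b-a)/(1-a) * 1 = (1-a)/(1-b) * omega_c b r y z + (a-b)/(1-b) * 1"
  by (simp add: divide_simps) (unfold D, algebra)

lemma b01: "1 - a \<noteq> 0 \<Longrightarrow> 1 - b \<noteq> 0 \<Longrightarrow>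
  beta2 a b r y z * ((1-b)/(1-a) * omega_c a r y z + (b-a)/(1-a) * 1) - x2 a b r y z * 1
  = (1-a)/(1-b) * (beta_c b r y z * omega_c b r y z - x_c b r y z) + (a-b)/(1-b) * omega_c b r y z"
  by (simp add: divide_simps) (unfold D, algebra)

lemma b10: "1 - a \<noteq> 0 \<Longrightarrow> 1 - b \<noteq> 0 \<Longrightarrow>
  (1-b)/(1-a) * (beta_c a r y z * omega_c a r y z - x_c a r y z) + (b-a)/(1-a) * omega_c a r y z
  = beta2 b a r y z * ((1-a)/(1-b) * omega_c b r y z + (a-b)/(1-b) * 1) - x2 b a r y z * 1"
  by (simp add: divide_simps) (unfold D, algebra)

lemma b11: "1 - a \<noteq> 0 \<Longrightarrow> 1 - b \<noteq> 0 \<Longrightarrow>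
  beta2 a b r y z * ((1-b)/(1-a) * (beta_c a r y z * omega_c a r y z - x_c a r y z) + (b-a)/(1-a) * omega_c a r y z) - x2 a b r y z * omega_c a r y z
  = beta2 b a r y z * ((1-a)/(1-b) * (beta_c b r y z * omega_c b r y z - x_c b r y z) + (a-b)/(1-b) * omega_c b r y z) - x2 b a r y z * omega_c b r y z"
  by (simp add: divide_simps) (unfold D, algebra)


lemma main_id:
  assumes ha: "1 - a \<noteq> 0" and hb: "1 - b \<noteq> 0"
    and xa: "x_c a r y z \<noteq> 0" and xb: "x_c b r y z \<noteq> 0" and f2: "2 \<le> f"
  shows "k \<le> f - 1 \<Longrightarrow> wup a b f r y z (f-1-k) i = wdn a b f r y z (f+i) k"
proof (induction k arbitrary: i rule: less_induct)
  case (less k)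
  have w2a: "wstar a r y z 2 = omega_c a r y z" using wstar2[OF xa] .
  have w2b: "wstar b r y z 2 = omega_c b r y z" using wstar2[OF xb] .
  have w3a: "wstar a r y z 3 = beta_c a r y z * omega_c a r y z - x_c a r y z" using wstar3[OF xa] .
  have w3b: "wstar b r y z 3 = beta_c b r y z * omega_c b r y z - x_c b r y z" using wstar3[OF xb] .
  have w1a: "wstar a r y z 1 = 1" and w1b: "wstar b r y z 1 = 1" by simp_all
  have small: "wup a b f r y z (f-1-k) i = wdn a b f r y z (f+i) k"
    if kk: "k = 0 \<or> k = 1" for i
  proof (induction i rule: less_induct)
    case (less i)
    have base: "wup a b f r y z (f-1-k) j = wdn a b f r y z (f+j) k" if "j = 0 \<or> j = 1" for j
    proof -
      have e: "f - (f - 1 - 0) = 1" "f - (f-1-0) + 1 = 2" "f - (f - 1 - 1) = 2" "f - (f-1-1) + 1 = 3"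
        "f + 0 - f + 2 = 2" "f + 0 - f + 1 = 1" "f + 1 - f + 2 = 3" "f + 1 - f + 1 = 2"
        "f - (f - 1) = 1" "f - (f-1) + 1 = 2" "f - f + 2 = 2" "f - f + 1 = 1"
        using f2 by auto
      from kk that show ?thesis
      proof (elim disjE)
        assume "k = 0" "j = 0" then show ?thesis
          using b00[OF ha hb, of r y z] by (simp only: wup.simps wdn.simps wup.simps(2)[folded One_nat_def] wdn.simps(2)[folded One_nat_def] e w1a w1b w2a w2b w3a w3b one_plus_one two_plus_one One_nat_def[symmetric] diff_zero add_0_right)
      next
        assume "k = 0" "j = 1" then show ?thesis
          using b01[OF ha hb, of r y z] by (simp only: wup.simps wdn.simps wup.simps(2)[folded One_nat_def] wdn.simps(2)[folded One_nat_def] e w1a w1b w2a w2b w3a w3b one_plus_one two_plus_one One_nat_def[symmetric] diff_zero add_0_right)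
      next
        assume "k = 1" "j = 0" then show ?thesis
          using b10[OF ha hb, of r y z] by (simp only: wup.simps wdn.simps wup.simps(2)[folded One_nat_def] wdn.simps(2)[folded One_nat_def] e w1a w1b w2a w2b w3a w3b one_plus_one two_plus_one One_nat_def[symmetric] diff_zero add_0_right)
      next
        assume "k = 1" "j = 1" then show ?thesis
          using b11[OF ha hb, of r y z] by (simp only: wup.simps wdn.simps wup.simps(2)[folded One_nat_def] wdn.simps(2)[folded One_nat_def] e w1a w1b w2a w2b w3a w3b one_plus_one two_plus_one One_nat_def[symmetric] diff_zero add_0_right)
      qed
    qed
    show ?case
    proof (cases "i \<le> 1")
      case True
      hence "i = 0 \<or> i = 1" by auto
      then show ?thesis by (rule base)
    next
      case False
      have "i = Suc (Suc (i - 2))" using False by arith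
      then obtain j where j: "i = Suc (Suc j)" by blast
      have i1: "wup a b f r y z (f-1-k) (Suc j) = wdn a b f r y z (f+Suc j) k" using less j by simp
      have i2: "wup a b f r y z (f-1-k) j = wdn a b f r y z (f+j) k" using less j by simp
      have sh: "wdn a b f r y z (f+j+2) k = beta_c b r y z * wdn a b f r y z (f+j+1) k - x_c b r y z * wdn a b f r y z (f+j) k"
        using wdn_shift[of f "f+j"] by simp
      show ?thesis using sh i1 i2 j by simp
    qed
  qed
  show ?case
  proof (cases "k \<le> 1")
    case True
    hence "k = 0 \<or> k = 1" by auto
    then show ?thesis by (rule small)
  next
    case False
    have "k = Suc (Suc (k - 2))" using False by arith
    then obtain k' where k': "k = Suc (Suc k')" by blast
    have i1: "wup a b f r y z (f-1-Suc k') i = wdn a b f r y z (f+i) (Suc k')" using less k' by simp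
    have i2: "wup a b f r y z (f-1-k') i = wdn a b f r y z (f+i) k'" using less k' by simp
    have sh: "wup a b f r y z (f-3-k') i = beta_c a r y z * wup a b f r y z (f-3-k'+1) i - x_c a r y z * wup a b f r y z (f-3-k'+2) i"
      using wup_shift[of "f-3-k'" f] less.prems k' by simp
    have e: "f-3-k'+1 = f-1-Suc k'" "f-3-k'+2 = f-1-k'" "f-1-k = f-3-k'" using less.prems k' by auto
    show ?thesis using sh i1 i2 k' e by simp
  qed
qed

theorem lemma2:
  fixes a b r y z :: real and f :: nat
  assumes "0 < a" and "a < 1" and "0 < b" and "b < 1" and "f \<ge> 3"
    and "z \<noteq> 0" and "tau_c a r y z \<noteq> 0" and "tau_c b r y z \<noteq> 0"
  shows "\<forall>m n. 1 \<le> m \<and> m < n \<longrightarrow> wbar a b f r y z m n = wbar a b f r y z (n - 1) (m - 1)"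
proof (intro allI impI)
  fix m n :: nat assume mn: "1 \<le> m \<and> m < n"
  have ha: "1 - a \<noteq> 0" and hb: "1 - b \<noteq> 0" using assms by auto
  have xa: "x_c a r y z \<noteq> 0" using assms by (simp add: x_c_def)
  have xb: "x_c b r y z \<noteq> 0" using assms by (simp add: x_c_def)
  obtain m' n' where mm: "m = Suc m'" and nn: "n = Suc n'" using mn by (metis Suc_le_D less_imp_Suc_add One_nat_def)
  have dd: "n - 1 - (m - 1) = n - m" using mn by auto
  show "wbar a b f r y z m n = wbar a b f r y z (n - 1) (m - 1)"
  proof (cases "n = m + 1")
    case True then show ?thesis using mn by (simp add: wbar_def)
  next
    case False
    hence n2: "m + 2 \<le> n" using mn by auto
    show ?thesis
    proof (cases "n \<le> f")
      case True
    hence "n' \<le> f - Suc 0" using nn by simp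
    then show ?thesis using mn n2 True unfolding mm nn by (simp add: wbar_def del: wstar.simps)
    next
      case nf: False
      show ?thesis
      proof (cases "f \<le> m")
        case True
        hence "f - Suc 0 \<le> m'" using mm by simp
        note c = this True mn n2 nf assms(5)
        have L: "wbar a b f r y z m n = wstar b r y z (n - m)"
          unfolding wbar_def using c by (simp del: wstar.simps)
        have R: "wbar a b f r y z n' m' = wstar b r y z (n' - m')"
          unfolding wbar_def using c unfolding mm nn by (simp del: wstar.simps)
        show ?thesis using L R unfolding mm nn by simp
      next
        case False
        have L: "wbar a b f r y z m n = wup a b f r y z m (n - (f + 1))"
          using mn n2 nf False by (simp add: wbar_def)
        have R: "wbar a b f r y z (n - 1) (m - 1) = wdn a b f r y z (n-1) (f - 2 - (m - 1))"
        proof -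
          have c: "\<not> n' \<le> f - 1" "\<not> f - 1 \<le> m'" "n' \<noteq> m' + 1" "m' \<noteq> n' + 1" "m' < n'" "\<not> n' < m'"
            using mn n2 nf False assms(5) unfolding mm nn by auto
          have "wbar a b f r y z n' m' = wdn a b f r y z n' (f - 2 - m')"
            unfolding wbar_def using c by (simp del: wstar.simps wdn.simps)
          then show ?thesis unfolding mm nn by simp
        qed
        have M: "wup a b f r y z (f-1-(f - 2 - (m - 1))) (n - (f + 1)) = wdn a b f r y z (f + (n - (f + 1))) (f - 2 - (m - 1))"
          by (rule main_id[OF ha hb xa xb]) (use assms(5) in auto)
        have e1: "f-1-(f - 2 - (m - 1)) = m" "f + (n - (f + 1)) = n - 1" using mn nf False assms(5) by auto
        show ?thesis using L R M e1 by simp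
      qed
    qed
  qed
qed

end
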